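(* Let $\bm\mu=(\mu_1,\dots,\mu_r)$ be finite positive Borel measures on the unit circle with infinite supports and $\bm n,\bm m\in\mathbb N^r$. Then $(\bm n,\bm m)$ is normal if and only if $(\bm m,\bm n)$ is normal, and in that case $\Phi_{\bm n,\bm m}^\sharp=\Phi^*_{\bm m,\bm n}$, where $\Phi^\sharp(z)=\overline{\Phi(1/\bar z)}$.
   Context: $|\bm n|=\sum_j n_j$. The pair $(\bm n,\bm m)$ is normal if there is a unique Laurent polynomial $\Phi_{\bm n,\bm m}\in\operatorname{span}\{z^p:-|\bm m|\le p\le|\bm n|\}$ with coefficient of $z^{|\bm n|}$ equal to $1$ such that $\int\Phi_{\bm n,\bm m}(w)w^{-p}\,d\mu_j(w)=0$ for $p=-m_j,\dots,n_j-1$, $j=1,\dots,r$. When $(\bm n,\bm m)$ is normal, $\Phi^*_{\bm n,\bm m}$ denotes the unique Laurent polynomial in $\operatorname{span}\{z^p:-|\bm m|\le p\le|\bm n|\}$ with coefficient of $z^{-|\bm m|}$ equal to $1$ such that $\int\Phi^*_{\bm n,\bm m}(w)w^{-p}\,d\mu_j(w)=0$ for $p=-m_j+1,\dots,n_j$, $j=1,\dots,r$ (its existence and uniqueness is equivalent to normality of $(\bm n,\bm m)$). *)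

theory Defs
  imports "HOL-Analysis.Analysis"
begin

text \<open>Laurent polynomials are represented by their coefficient functions
  c :: int => complex; evaluation at w (w nonzero) of the finite sum over p in {lo..hi}.\<close>

definition laurent_eval :: "int \<Rightarrow> int \<Rightarrow> (int \<Rightarrow> complex) \<Rightarrow> complex \<Rightarrow> complex" where
  "laurent_eval lo hi c w = (\<Sum>p\<in>{lo..hi}. c p * w powi p)"

definition tot :: "nat \<Rightarrow> (nat \<Rightarrow> nat) \<Rightarrow> nat" where
  "tot r n = (\<Sum>j<r. n j)"

definition msupport :: "complex measure \<Rightarrow> complex set" where
  "msupport \<mu> = {z. \<forall>e>0. emeasure \<mu> (ball z e) > 0}"

definition circle_measure :: "complex measure \<Rightarrow> bool" where
  "circle_measure \<mu> \<longleftrightarrow> sets \<mu> = sets borel \<and> finite_measure \<mu>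
     \<and> emeasure \<mu> (- sphere 0 1) = 0 \<and> infinite (msupport \<mu>)"

text \<open>c is a type II multiple orthogonal Laurent polynomial candidate for (n,m):
  c in span{z^p : -|m| <= p <= |n|}, coefficient of z^{|n|} equal to 1,
  orthogonality for p = -m_j .. n_j - 1.\<close>
definition is_Phi :: "nat \<Rightarrow> (nat \<Rightarrow> complex measure) \<Rightarrow> (nat \<Rightarrow> nat) \<Rightarrow> (nat \<Rightarrow> nat)
                      \<Rightarrow> (int \<Rightarrow> complex) \<Rightarrow> bool" where
  "is_Phi r \<mu> n m c \<longleftrightarrow>
     (\<forall>p. p \<notin> {- int (tot r m)..int (tot r n)} \<longrightarrow> c p = 0)
     \<and> c (int (tot r n)) = 1
     \<and> (\<forall>j<r. \<forall>p\<in>{- int (m j)..int (n j) - 1}.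
          integral\<^sup>L (\<mu> j) (\<lambda>w. laurent_eval (- int (tot r m)) (int (tot r n)) c w * w powi (- p)) = 0)"

definition normal :: "nat \<Rightarrow> (nat \<Rightarrow> complex measure) \<Rightarrow> (nat \<Rightarrow> nat) \<Rightarrow> (nat \<Rightarrow> nat) \<Rightarrow> bool" where
  "normal r \<mu> n m \<longleftrightarrow> (\<exists>!c. is_Phi r \<mu> n m c)"

definition Phi :: "nat \<Rightarrow> (nat \<Rightarrow> complex measure) \<Rightarrow> (nat \<Rightarrow> nat) \<Rightarrow> (nat \<Rightarrow> nat) \<Rightarrow> (int \<Rightarrow> complex)" where
  "Phi r \<mu> n m = (THE c. is_Phi r \<mu> n m c)"

definition is_PhiStar :: "nat \<Rightarrow> (nat \<Rightarrow> complex measure) \<Rightarrow> (nat \<Rightarrow> nat) \<Rightarrow> (nat \<Rightarrow> nat)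
                      \<Rightarrow> (int \<Rightarrow> complex) \<Rightarrow> bool" where
  "is_PhiStar r \<mu> n m c \<longleftrightarrow>
     (\<forall>p. p \<notin> {- int (tot r m)..int (tot r n)} \<longrightarrow> c p = 0)
     \<and> c (- int (tot r m)) = 1
     \<and> (\<forall>j<r. \<forall>p\<in>{- int (m j) + 1..int (n j)}.
          integral\<^sup>L (\<mu> j) (\<lambda>w. laurent_eval (- int (tot r m)) (int (tot r n)) c w * w powi (- p)) = 0)"

definition PhiStar :: "nat \<Rightarrow> (nat \<Rightarrow> complex measure) \<Rightarrow> (nat \<Rightarrow> nat) \<Rightarrow> (nat \<Rightarrow> nat) \<Rightarrow> (int \<Rightarrow> complex)" where
  "PhiStar r \<mu> n m = (THE c. is_PhiStar r \<mu> n m c)"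

end

theory Submission
  imports Defs "Jordan_Normal_Form.Determinant"
begin

lemma square_sys:
  fixes A :: "'c \<Rightarrow> 'i \<Rightarrow> complex"
  assumes fS: "finite S" and fC: "finite C" and card: "card S = card C"
    and inj: "\<And>x. (\<forall>i\<in>C. (\<Sum>k\<in>S. x k * A i k) = 0) \<Longrightarrow> \<forall>k\<in>S. x k = 0"
  shows "\<exists>x. \<forall>i\<in>C. (\<Sum>k\<in>S. x k * A i k) = b i"
proof -
  define N where "N = card S"
  obtain fs where fs: "bij_betw fs {0..<N} S" using ex_bij_betw_nat_finite[OF fS] N_def by blast
  obtain fc where fc: "bij_betw fc {0..<N} C" using ex_bij_betw_nat_finite[OF fC] N_def card by auto
  define M :: "complex mat" where "M = mat N N (\<lambda>(a,c). A (fc a) (fs c))"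
  have M: "M \<in> carrier_mat N N" unfolding M_def by simp
  have key: "(\<Sum>k\<in>S. x k * A (fc a) k) = (M *\<^sub>v vec N (\<lambda>c. x (fs c))) $ a" if "a < N" for x a
  proof -
    have "(\<Sum>k\<in>S. x k * A (fc a) k) = (\<Sum>c\<in>{0..<N}. x (fs c) * A (fc a) (fs c))"
      using sum.reindex_bij_betw[OF fs, of "\<lambda>k. x k * A (fc a) k"] by simp
    also have "\<dots> = (M *\<^sub>v vec N (\<lambda>c. x (fs c))) $ a"
      using that unfolding M_def by (simp add: mult_mat_vec_def scalar_prod_def mult.commute)
    finally show ?thesis .
  qed
  have "det M \<noteq> 0"
  proof
    assume "det M = 0"
    then obtain v where v: "v \<in> carrier_vec N" "v \<noteq> 0\<^sub>v N" "M *\<^sub>v v = 0\<^sub>v N"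
      using det_0_iff_vec_prod_zero_field[OF M] by blast
    define x where "x = (\<lambda>k. v $ (the_inv_into {0..<N} fs k))"
    have vx: "vec N (\<lambda>c. x (fs c)) = v"
      using v(1) fs unfolding x_def
      by (intro eq_vecI) (auto simp: bij_betw_def the_inv_into_f_f)
    have "\<forall>i\<in>C. (\<Sum>k\<in>S. x k * A i k) = 0"
    proof
      fix i assume "i \<in> C"
      then obtain a where a: "a < N" "i = fc a" using fc by (auto simp: bij_betw_def)
      show "(\<Sum>k\<in>S. x k * A i k) = 0" using key[OF a(1), of x] vx v(3) a by simp
    qed
    from inj[OF this] have "\<forall>k\<in>S. x k = 0" .
    hence "v = 0\<^sub>v N" using vx[symmetric] fs v(1)
      by (intro eq_vecI) (auto simp: bij_betw_def)
    with v(2) show False by simp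
  qed
  from det_non_zero_imp_unit[OF M this, of "()"]
  obtain B where B: "B \<in> carrier_mat N N" "M * B = 1\<^sub>m N"
    by (auto simp: Units_def ring_mat_def)
  define bv where "bv = vec N (\<lambda>a. b (fc a))"
  define v where "v = B *\<^sub>v bv"
  have v: "v \<in> carrier_vec N" using B unfolding v_def bv_def by simp
  have bvc: "bv \<in> carrier_vec N" unfolding bv_def by simp
  have Mv: "M *\<^sub>v v = bv" unfolding v_def
    using assoc_mult_mat_vec[OF M B(1) bvc] B(2) bvc by simp
  define x where "x = (\<lambda>k. v $ (the_inv_into {0..<N} fs k))"
  have vx: "vec N (\<lambda>c. x (fs c)) = v"
    using v fs unfolding x_def
    by (intro eq_vecI) (auto simp: bij_betw_def the_inv_into_f_f)
  show ?thesis
  proof (intro exI ballI)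
    fix i assume "i \<in> C"
    then obtain a where a: "a < N" "i = fc a" using fc by (auto simp: bij_betw_def)
    show "(\<Sum>k\<in>S. x k * A i k) = b i" using key[OF a(1), of x] vx Mv a by (simp add: bv_def)
  qed
qed



definition mom :: "complex measure \<Rightarrow> int \<Rightarrow> complex" where
  "mom M q = integral\<^sup>L M (\<lambda>w. w powi q)"

definition sharp :: "(int \<Rightarrow> complex) \<Rightarrow> int \<Rightarrow> complex" where
  "sharp c = (\<lambda>k. cnj (c (- k)))"

lemma cnj_powi: "cnj (x powi n) = cnj x powi n"
  by (simp add: power_int_def)

lemma meas_powi_borel: "(\<lambda>w::complex. w powi q) \<in> borel_measurable borel"
  unfolding power_int_def by (cases "0 \<le> q") simp_all

lemma meas_powi:
  assumes "sets M = sets borel"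
  shows "(\<lambda>w::complex. w powi q) \<in> borel_measurable M"
  using meas_powi_borel measurable_cong_sets[OF assms refl] by blast

lemma AE_circle:
  assumes "circle_measure M"
  shows "AE w in M. norm w = 1"
proof (rule AE_I')
  have s: "sets M = sets borel" using assms by (simp add: circle_measure_def)
  have "- sphere (0::complex) 1 \<in> sets borel" by (simp add: closed_sphere borel_closed sets.compl_sets) 
  then have "- sphere (0::complex) 1 \<in> sets M" using s by simp
  then show "- sphere (0::complex) 1 \<in> null_sets M"
    using assms by (simp add: circle_measure_def null_sets_def)
  show "{x \<in> space M. norm x \<noteq> 1} \<subseteq> - sphere 0 1" by auto
qed

lemma integrable_powi:
  assumes "circle_measure M"
  shows "integrable M (\<lambda>w. w powi q)"
proof -
  interpret finite_measure M using assms by (simp add: circle_measure_def)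
  show ?thesis
  proof (rule integrable_const_bound[where B=1])
    show "AE x in M. norm (x powi q) \<le> 1"
      using AE_circle[OF assms] by eventually_elim (simp add: norm_power_int)
    show "(\<lambda>w. w powi q) \<in> borel_measurable M"
      using assms by (intro meas_powi) (simp add: circle_measure_def)
  qed
qed

lemma expand:
  assumes "circle_measure M"
  shows "integral\<^sup>L M (\<lambda>w. laurent_eval lo hi c w * w powi (- p))
       = (\<Sum>k\<in>{lo..hi}. c k * mom M (k - p))"
proof -
  have s: "sets M = sets borel" using assms by (simp add: circle_measure_def)
  note mp = meas_powi[OF s]
  have "integral\<^sup>L M (\<lambda>w. laurent_eval lo hi c w * w powi (- p))
      = integral\<^sup>L M (\<lambda>w. \<Sum>k\<in>{lo..hi}. c k * w powi (k - p))"
  proof (rule integral_cong_AE)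
    show "(\<lambda>w. laurent_eval lo hi c w * w powi (- p)) \<in> borel_measurable M"
      unfolding laurent_eval_def using mp by measurable
    show "(\<lambda>w. \<Sum>k\<in>{lo..hi}. c k * w powi (k - p)) \<in> borel_measurable M"
      using mp by measurable
    show "AE w in M. laurent_eval lo hi c w * w powi (- p) = (\<Sum>k\<in>{lo..hi}. c k * w powi (k - p))"
      using AE_circle[OF assms]
    proof eventually_elim
      case (elim w)
      then have w: "w \<noteq> 0" by auto
      have "laurent_eval lo hi c w * w powi (- p) = (\<Sum>k\<in>{lo..hi}. c k * (w powi k * w powi (- p)))"
        unfolding laurent_eval_def by (simp add: sum_distrib_right mult.assoc)
      also have "\<dots> = (\<Sum>k\<in>{lo..hi}. c k * w powi (k - p))"
        using w by (simp add: power_int_add[symmetric])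
      finally show ?case .
    qed
  qed
  also have "\<dots> = (\<Sum>k\<in>{lo..hi}. integral\<^sup>L M (\<lambda>w. c k * w powi (k - p)))"
    by (subst Bochner_Integration.integral_sum) (auto simp: integrable_powi[OF assms])
  also have "\<dots> = (\<Sum>k\<in>{lo..hi}. c k * mom M (k - p))"
    by (simp add: mom_def)
  finally show ?thesis .
qed

lemma mom_cnj:
  assumes "circle_measure M"
  shows "cnj (mom M q) = mom M (- q)"
proof -
  have s: "sets M = sets borel" using assms by (simp add: circle_measure_def)
  have "cnj (mom M q) = integral\<^sup>L M (\<lambda>w. cnj (w powi q))" unfolding mom_def by (rule Bochner_Integration.integral_cnj[symmetric])
  also have "\<dots> = mom M (- q)" unfolding mom_def
  proof (rule integral_cong_AE)
    have "cnj \<in> borel_measurable (borel :: complex measure)"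
      by (intro borel_measurable_continuous_onI continuous_on_cnj continuous_on_id)
    then show "(\<lambda>w. cnj (w powi q)) \<in> borel_measurable M"
      using measurable_compose[OF meas_powi[OF s]] by blast
    show "(\<lambda>w. w powi (- q)) \<in> borel_measurable M" using meas_powi[OF s] by measurable
    show "AE w in M. cnj (w powi q) = w powi (- q)"
      using AE_circle[OF assms]
    proof eventually_elim
      case (elim w)
      have e: "w * cnj w = complex_of_real ((cmod w)^2)" by (rule complex_norm_square[symmetric])
      have "w * cnj w = 1" by (simp only: e elim) simp
      then have "cnj w = inverse w" by (simp add: inverse_unique)
      then show ?case by (simp add: cnj_powi power_int_minus power_int_inverse)
    qed
  qed
  finally show ?thesis .
qed

lemma sum_neg_reindex:
  "(\<Sum>k\<in>{-hi..-lo}. f k) = (\<Sum>k\<in>{lo..hi::int}. f (- k))"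
  by (rule sum.reindex_bij_witness[where i=uminus and j=uminus]) auto

lemma sharp_eval:
  "cnj (laurent_eval lo hi c (1 / cnj z)) = laurent_eval (- hi) (- lo) (sharp c) z"
proof -
  have "cnj (laurent_eval lo hi c (1 / cnj z)) = (\<Sum>k\<in>{lo..hi}. cnj (c k) * z powi (- k))"
    unfolding laurent_eval_def
    by (simp add: cnj_powi power_int_minus power_int_inverse divide_inverse)
  also have "\<dots> = laurent_eval (- hi) (- lo) (sharp c) z"
    unfolding laurent_eval_def sharp_def sum_neg_reindex by simp
  finally show ?thesis .
qed

lemma sharp_int:
  assumes "circle_measure M"
  shows "integral\<^sup>L M (\<lambda>w. laurent_eval (- hi) (- lo) (sharp c) w * w powi (- p))
       = cnj (integral\<^sup>L M (\<lambda>w. laurent_eval lo hi c w * w powi (- (- p))))"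
  unfolding expand[OF assms] sum_neg_reindex
  by (simp add: sharp_def mom_cnj[OF assms] algebra_simps)

lemma sharp_sharp[simp]: "sharp (sharp c) = c"
  by (simp add: sharp_def)



definition homtriv :: "int set \<Rightarrow> 'c set \<Rightarrow> ('c \<Rightarrow> int \<Rightarrow> complex) \<Rightarrow> bool" where
  "homtriv S C A \<longleftrightarrow> (\<forall>x. (\<forall>k. k \<notin> S \<longrightarrow> x k = 0) \<and> (\<forall>i\<in>C. (\<Sum>k\<in>S. x k * A i k) = 0)
      \<longrightarrow> (\<forall>k. x k = 0))"

lemma shiftH:
  fixes f :: "nat \<Rightarrow> int \<Rightarrow> complex" and s :: int
  assumes S: "\<And>k. k \<in> SB \<longleftrightarrow> k - s \<in> SA"
    and C: "\<And>j p. (j, p) \<in> CB \<longleftrightarrow> (j, p - s) \<in> CA"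
    and H: "homtriv SA CA (\<lambda>i k. f (fst i) (k - snd i))"
  shows "homtriv SB CB (\<lambda>i k. f (fst i) (k - snd i))"
  unfolding homtriv_def
proof (rule allI, rule impI)
  fix x assume x: "(\<forall>k. k \<notin> SB \<longrightarrow> x k = 0) \<and> (\<forall>i\<in>CB. (\<Sum>k\<in>SB. x k * f (fst i) (k - snd i)) = 0)"
  define y where "y k = x (k + s)" for k
  have y1: "\<forall>k. k \<notin> SA \<longrightarrow> y k = 0" using x S by (simp add: y_def)
  have y2: "\<forall>i\<in>CA. (\<Sum>k\<in>SA. y k * f (fst i) (k - snd i)) = 0"
  proof
    fix i assume i: "i \<in> CA"
    obtain j p where ijp: "i = (j, p)" by (cases i)
    have CB: "(j, p + s) \<in> CB" using C[of j "p + s"] i ijp by simp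
    have "(\<Sum>k\<in>SA. y k * f j (k - p)) = (\<Sum>k\<in>SB. x k * f j (k - (p + s)))"
      by (rule sum.reindex_bij_witness[where i="\<lambda>k. k - s" and j="\<lambda>k. k + s"])
         (auto simp: y_def S algebra_simps)
    also have "\<dots> = 0" using x CB by auto
    finally have eq: "(\<Sum>k\<in>SA. y k * f j (k - p)) = 0" .
    from eq ijp show "(\<Sum>k\<in>SA. y k * f (fst i) (k - snd i)) = 0" by simp
  qed
  have "\<forall>k. y k = 0" using H y1 y2 unfolding homtriv_def by blast
  then show "\<forall>k. x k = 0" unfolding y_def by (metis diff_add_cancel)
qed




lemma uniq_iff:
  fixes A :: "'c \<Rightarrow> int \<Rightarrow> complex"
  assumes fC: "finite C" and t: "t \<in> {lo..hi}" and card: "card C = card ({lo..hi} - {t})"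
  shows "(\<exists>!c. (\<forall>p. p \<notin> {lo..hi} \<longrightarrow> c p = 0) \<and> c t = 1
              \<and> (\<forall>i\<in>C. (\<Sum>k\<in>{lo..hi}. c k * A i k) = 0))
         \<longleftrightarrow> homtriv ({lo..hi} - {t}) C A" (is "(\<exists>!c. ?P c) \<longleftrightarrow> _")
proof -
  define S where "S = {lo..hi} - {t}"
  have fS: "finite S" unfolding S_def by simp
  have R: "{lo..hi} = insert t S" "t \<notin> S" using t unfolding S_def by auto
  have split: "(\<Sum>k\<in>{lo..hi}. f k) = f t + (\<Sum>k\<in>S. f k)" for f :: "int \<Rightarrow> complex"
    using R fS by simp
  have SR: "k \<in> S \<Longrightarrow> k \<in> {lo..hi}" for k unfolding S_def by blast
  show ?thesis unfolding S_def[symmetric]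
  proof
    assume ex: "\<exists>!c. ?P c"
    then obtain c where c: "?P c" by blast
    have uq: "\<And>d. ?P d \<Longrightarrow> d = c" using ex c by (simp only: Ex1_def) blast
    from c have c1: "\<And>p. p \<notin> {lo..hi} \<Longrightarrow> c p = 0" and c2: "c t = 1"
      and c3: "\<And>i. i \<in> C \<Longrightarrow> (\<Sum>k\<in>{lo..hi}. c k * A i k) = 0" by blast+
    show "homtriv S C A" unfolding homtriv_def
    proof (rule allI, rule impI)
      fix x assume x: "(\<forall>k. k \<notin> S \<longrightarrow> x k = 0) \<and> (\<forall>i\<in>C. (\<Sum>k\<in>S. x k * A i k) = 0)"
      from x have x1: "\<And>k. k \<notin> S \<Longrightarrow> x k = 0" and x2: "\<And>i. i \<in> C \<Longrightarrow> (\<Sum>k\<in>S. x k * A i k) = 0"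
        by blast+
      have "?P (\<lambda>k. c k + x k)"
      proof (intro conjI allI impI ballI)
        fix p assume p: "p \<notin> {lo..hi}"
        then have "p \<notin> S" using SR by blast
        then show "c p + x p = 0" using c1[OF p] x1 by simp
      next
        show "c t + x t = 1" using c2 x1[OF R(2)] by simp
      next
        fix i assume i: "i \<in> C"
        have "(\<Sum>k\<in>{lo..hi}. (c k + x k) * A i k) = (\<Sum>k\<in>{lo..hi}. c k * A i k) + (\<Sum>k\<in>{lo..hi}. x k * A i k)"
          by (simp add: distrib_right sum.distrib)
        also have "(\<Sum>k\<in>{lo..hi}. x k * A i k) = x t * A i t + (\<Sum>k\<in>S. x k * A i k)"
          by (rule split)
        finally show "(\<Sum>k\<in>{lo..hi}. (c k + x k) * A i k) = 0"
          using c3[OF i] x2[OF i] x1[OF R(2)] by simp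
      qed
      then have "(\<lambda>k. c k + x k) = c" by (rule uq)
      then have "c k + x k = c k" for k by (rule fun_cong)
      then show "\<forall>k. x k = 0" by simp
    qed
  next
    assume H: "homtriv S C A"
    have inj: "\<forall>k\<in>S. x k = 0" if xh: "\<forall>i\<in>C. (\<Sum>k\<in>S. x k * A i k) = 0" for x
    proof -
      define y where "y k = (if k \<in> S then x k else 0)" for k
      have "(\<Sum>k\<in>S. y k * A i k) = (\<Sum>k\<in>S. x k * A i k)" for i
        by (rule sum.cong) (auto simp: y_def)
      then have y2: "\<forall>i\<in>C. (\<Sum>k\<in>S. y k * A i k) = 0" using xh by simp
      have y1: "\<forall>k. k \<notin> S \<longrightarrow> y k = 0" by (simp add: y_def)
      have "\<forall>k. y k = 0" using H y1 y2 unfolding homtriv_def by blast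
      then show ?thesis by (simp add: y_def split: if_splits)
    qed
    have cardS: "card S = card C" using card S_def by simp
    obtain x where x: "\<forall>i\<in>C. (\<Sum>k\<in>S. x k * A i k) = - A i t"
      using square_sys[OF fS fC cardS inj, where b="\<lambda>i. - A i t"] by blast
    define c where "c k = (if k \<in> S then x k else if k = t then 1 else 0)" for k
    have Pc: "?P c"
    proof (intro conjI allI impI ballI)
      fix p assume "p \<notin> {lo..hi}" then show "c p = 0" using R by (auto simp: c_def)
    next
      show "c t = 1" using R by (simp add: c_def)
    next
      fix i assume i: "i \<in> C"
      have "(\<Sum>k\<in>S. c k * A i k) = (\<Sum>k\<in>S. x k * A i k)"
        by (rule sum.cong) (auto simp: c_def)
      then show "(\<Sum>k\<in>{lo..hi}. c k * A i k) = 0" unfolding split using x i R by (simp add: c_def)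
    qed
    show "\<exists>!c. ?P c"
    proof (rule ex1I[of _ c])
      show "?P c" by (rule Pc)
    next
      fix d assume d: "?P d"
      define z where "z k = d k - c k" for k
      have z1: "\<forall>k. k \<notin> S \<longrightarrow> z k = 0"
      proof (intro allI impI)
        fix k assume "k \<notin> S"
        then show "z k = 0" using d Pc R by (cases "k = t") (auto simp: z_def)
      qed
      have z2: "\<forall>i\<in>C. (\<Sum>k\<in>S. z k * A i k) = 0"
      proof
        fix i assume i: "i \<in> C"
        have "(\<Sum>k\<in>{lo..hi}. z k * A i k) = (\<Sum>k\<in>{lo..hi}. d k * A i k) - (\<Sum>k\<in>{lo..hi}. c k * A i k)"
          unfolding z_def by (simp add: left_diff_distrib sum_subtractf)
        also have "\<dots> = 0" using d Pc i by simp
        finally have "(\<Sum>k\<in>{lo..hi}. z k * A i k) = 0" .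
        then show "(\<Sum>k\<in>S. z k * A i k) = 0" unfolding split using z1 R by simp
      qed
      have "\<forall>k. z k = 0" using H z1 z2 unfolding homtriv_def by blast
      then show "d = c" unfolding z_def by auto
    qed
  qed
qed




definition CP :: "nat \<Rightarrow> (nat \<Rightarrow> nat) \<Rightarrow> (nat \<Rightarrow> nat) \<Rightarrow> (nat \<times> int) set" where
  "CP r n m = Sigma {..<r} (\<lambda>j. {- int (m j)..int (n j) - 1})"
definition CS :: "nat \<Rightarrow> (nat \<Rightarrow> nat) \<Rightarrow> (nat \<Rightarrow> nat) \<Rightarrow> (nat \<times> int) set" where
  "CS r n m = Sigma {..<r} (\<lambda>j. {- int (m j) + 1..int (n j)})"
definition AA :: "(nat \<Rightarrow> complex measure) \<Rightarrow> nat \<times> int \<Rightarrow> int \<Rightarrow> complex" where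
  "AA \<mu> = (\<lambda>i k. mom (\<mu> (fst i)) (k - snd i))"

lemma is_Phi_alt:
  assumes circ: "\<And>j. j < r \<Longrightarrow> circle_measure (\<mu> j)"
  shows "is_Phi r \<mu> n m c \<longleftrightarrow> (\<forall>p. p \<notin> {- int (tot r m)..int (tot r n)} \<longrightarrow> c p = 0)
     \<and> c (int (tot r n)) = 1
     \<and> (\<forall>i\<in>CP r n m. (\<Sum>k\<in>{- int (tot r m)..int (tot r n)}. c k * AA \<mu> i k) = 0)"
proof -
  have e: "\<And>j p. j < r \<Longrightarrow> integral\<^sup>L (\<mu> j) (\<lambda>w. laurent_eval (- int (tot r m)) (int (tot r n)) c w * w powi (- p))
     = (\<Sum>k\<in>{- int (tot r m)..int (tot r n)}. c k * AA \<mu> (j, p) k)"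
    using expand[OF circ] by (simp add: AA_def)
  show ?thesis unfolding is_Phi_def CP_def using e by auto
qed

lemma is_PhiStar_alt:
  assumes circ: "\<And>j. j < r \<Longrightarrow> circle_measure (\<mu> j)"
  shows "is_PhiStar r \<mu> n m c \<longleftrightarrow> (\<forall>p. p \<notin> {- int (tot r m)..int (tot r n)} \<longrightarrow> c p = 0)
     \<and> c (- int (tot r m)) = 1
     \<and> (\<forall>i\<in>CS r n m. (\<Sum>k\<in>{- int (tot r m)..int (tot r n)}. c k * AA \<mu> i k) = 0)"
proof -
  have e: "\<And>j p. j < r \<Longrightarrow> integral\<^sup>L (\<mu> j) (\<lambda>w. laurent_eval (- int (tot r m)) (int (tot r n)) c w * w powi (- p))
     = (\<Sum>k\<in>{- int (tot r m)..int (tot r n)}. c k * AA \<mu> (j, p) k)"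
    using expand[OF circ] by (simp add: AA_def)
  show ?thesis unfolding is_PhiStar_def CS_def using e by auto
qed

lemma card_CP: "card (CP r n m) = tot r n + tot r m"
proof -
  have "card (CP r n m) = (\<Sum>j<r. card {- int (m j)..int (n j) - 1})"
    unfolding CP_def by (simp add: card_SigmaI)
  also have "\<dots> = (\<Sum>j<r. n j + m j)" by (simp add: nat_add_distrib)
  finally show ?thesis by (simp add: tot_def sum.distrib)
qed

lemma card_CS: "card (CS r n m) = tot r n + tot r m"
proof -
  have "card (CS r n m) = (\<Sum>j<r. card {- int (m j) + 1..int (n j)})"
    unfolding CS_def by (simp add: card_SigmaI)
  also have "\<dots> = (\<Sum>j<r. n j + m j)" by (simp add: nat_add_distrib)
  finally show ?thesis by (simp add: tot_def sum.distrib)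
qed

lemma card_range:
  assumes "t \<in> {- int a..int b}"
  shows "card ({- int a..int b} - {t}) = b + a"
  using assms by (simp add: card_Diff_singleton)

lemma normal_iff_H:
  assumes circ: "\<And>j. j < r \<Longrightarrow> circle_measure (\<mu> j)"
  shows "normal r \<mu> n m \<longleftrightarrow>
    homtriv ({- int (tot r m)..int (tot r n)} - {int (tot r n)}) (CP r n m) (AA \<mu>)"
proof -
  have eq: "is_Phi r \<mu> n m = (\<lambda>c. (\<forall>p. p \<notin> {- int (tot r m)..int (tot r n)} \<longrightarrow> c p = 0)
     \<and> c (int (tot r n)) = 1
     \<and> (\<forall>i\<in>CP r n m. (\<Sum>k\<in>{- int (tot r m)..int (tot r n)}. c k * AA \<mu> i k) = 0))"
    by (rule ext) (rule is_Phi_alt[OF circ])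
  have f: "finite (CP r n m)" by (simp add: CP_def)
  have t: "int (tot r n) \<in> {- int (tot r m)..int (tot r n)}" by simp
  have cd: "card (CP r n m) = card ({- int (tot r m)..int (tot r n)} - {int (tot r n)})"
    unfolding card_CP by (subst card_range[OF t]) simp
  show ?thesis unfolding normal_def eq by (rule uniq_iff[OF f t cd])
qed

lemma star_iff_H:
  assumes circ: "\<And>j. j < r \<Longrightarrow> circle_measure (\<mu> j)"
  shows "(\<exists>!c. is_PhiStar r \<mu> n m c) \<longleftrightarrow>
    homtriv ({- int (tot r m)..int (tot r n)} - {- int (tot r m)}) (CS r n m) (AA \<mu>)"
proof -
  have eq: "is_PhiStar r \<mu> n m = (\<lambda>c. (\<forall>p. p \<notin> {- int (tot r m)..int (tot r n)} \<longrightarrow> c p = 0)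
     \<and> c (- int (tot r m)) = 1
     \<and> (\<forall>i\<in>CS r n m. (\<Sum>k\<in>{- int (tot r m)..int (tot r n)}. c k * AA \<mu> i k) = 0))"
    by (rule ext) (rule is_PhiStar_alt[OF circ])
  have f: "finite (CS r n m)" by (simp add: CS_def)
  have t: "- int (tot r m) \<in> {- int (tot r m)..int (tot r n)}" by simp
  have cd: "card (CS r n m) = card ({- int (tot r m)..int (tot r n)} - {- int (tot r m)})"
    unfolding card_CS by (subst card_range[OF t]) simp
  show ?thesis unfolding eq by (rule uniq_iff[OF f t cd])
qed

lemma H_equiv:
  "homtriv ({- int (tot r m)..int (tot r n)} - {int (tot r n)}) (CP r n m) (AA \<mu>) \<longleftrightarrow>
   homtriv ({- int (tot r m)..int (tot r n)} - {- int (tot r m)}) (CS r n m) (AA \<mu>)"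
  unfolding AA_def
proof
  assume H: "homtriv ({- int (tot r m)..int (tot r n)} - {int (tot r n)}) (CP r n m) (\<lambda>i k. mom (\<mu> (fst i)) (k - snd i))"
  show "homtriv ({- int (tot r m)..int (tot r n)} - {- int (tot r m)}) (CS r n m) (\<lambda>i k. mom (\<mu> (fst i)) (k - snd i))"
    by (rule shiftH[where f="\<lambda>j. mom (\<mu> j)" and s=1 and SB="{- int (tot r m)..int (tot r n)} - {- int (tot r m)}" and CB="CS r n m", OF _ _ H]) (auto simp: CS_def CP_def)
next
  assume H: "homtriv ({- int (tot r m)..int (tot r n)} - {- int (tot r m)}) (CS r n m) (\<lambda>i k. mom (\<mu> (fst i)) (k - snd i))"
  show "homtriv ({- int (tot r m)..int (tot r n)} - {int (tot r n)}) (CP r n m) (\<lambda>i k. mom (\<mu> (fst i)) (k - snd i))"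
    by (rule shiftH[where f="\<lambda>j. mom (\<mu> j)" and s="-1" and SB="{- int (tot r m)..int (tot r n)} - {int (tot r n)}" and CB="CP r n m", OF _ _ H]) (auto simp: CS_def CP_def)
qed

lemma sharp_Phi:
  assumes circ: "\<And>j. j < r \<Longrightarrow> circle_measure (\<mu> j)" and c: "is_Phi r \<mu> n m c"
  shows "is_PhiStar r \<mu> m n (sharp c)"
  unfolding is_PhiStar_def
proof (intro conjI allI impI ballI)
  fix p assume "p \<notin> {- int (tot r n)..int (tot r m)}"
  then show "sharp c p = 0" using c by (auto simp: sharp_def is_Phi_def)
next
  show "sharp c (- int (tot r n)) = 1" using c by (simp add: sharp_def is_Phi_def)
next
  fix j p assume j: "j < r" and p: "p \<in> {- int (n j) + 1..int (m j)}"
  have "integral\<^sup>L (\<mu> j) (\<lambda>w. laurent_eval (- int (tot r n)) (int (tot r m)) (sharp c) w * w powi (- p))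
     = cnj (integral\<^sup>L (\<mu> j) (\<lambda>w. laurent_eval (- int (tot r m)) (int (tot r n)) c w * w powi (- (- p))))"
    using sharp_int[OF circ[OF j], where hi="int (tot r n)" and lo="- int (tot r m)" and c=c and p=p]
    by simp
  also have "\<dots> = 0"
  proof -
    have mp: "- p \<in> {- int (m j)..int (n j) - 1}" using p by auto
    from c have h: "\<forall>j<r. \<forall>p\<in>{- int (m j)..int (n j) - 1}.
          integral\<^sup>L (\<mu> j) (\<lambda>w. laurent_eval (- int (tot r m)) (int (tot r n)) c w * w powi (- p)) = 0"
      unfolding is_Phi_def by blast
    show ?thesis using h[rule_format, OF j mp] by simp
  qed
  finally show "integral\<^sup>L (\<mu> j) (\<lambda>w. laurent_eval (- int (tot r n)) (int (tot r m)) (sharp c) w * w powi (- p)) = 0" .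
qed

lemma sharp_Star:
  assumes circ: "\<And>j. j < r \<Longrightarrow> circle_measure (\<mu> j)" and c: "is_PhiStar r \<mu> m n c"
  shows "is_Phi r \<mu> n m (sharp c)"
  unfolding is_Phi_def
proof (intro conjI allI impI ballI)
  fix p assume "p \<notin> {- int (tot r m)..int (tot r n)}"
  then show "sharp c p = 0" using c by (auto simp: sharp_def is_PhiStar_def)
next
  show "sharp c (int (tot r n)) = 1" using c by (simp add: sharp_def is_PhiStar_def)
next
  fix j p assume j: "j < r" and p: "p \<in> {- int (m j)..int (n j) - 1}"
  have "integral\<^sup>L (\<mu> j) (\<lambda>w. laurent_eval (- int (tot r m)) (int (tot r n)) (sharp c) w * w powi (- p))
     = cnj (integral\<^sup>L (\<mu> j) (\<lambda>w. laurent_eval (- int (tot r n)) (int (tot r m)) c w * w powi (- (- p))))"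
    using sharp_int[OF circ[OF j], where hi="int (tot r m)" and lo="- int (tot r n)" and c=c and p=p]
    by simp
  also have "\<dots> = 0"
  proof -
    have mp: "- p \<in> {- int (n j) + 1..int (m j)}" using p by auto
    from c have h: "\<forall>j<r. \<forall>p\<in>{- int (n j) + 1..int (m j)}.
          integral\<^sup>L (\<mu> j) (\<lambda>w. laurent_eval (- int (tot r n)) (int (tot r m)) c w * w powi (- p)) = 0"
      unfolding is_PhiStar_def by blast
    show ?thesis using h[rule_format, OF j mp] by simp
  qed
  finally show "integral\<^sup>L (\<mu> j) (\<lambda>w. laurent_eval (- int (tot r m)) (int (tot r n)) (sharp c) w * w powi (- p)) = 0" .
qed

lemma normal_star:
  assumes circ: "\<And>j. j < r \<Longrightarrow> circle_measure (\<mu> j)"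
  shows "normal r \<mu> n m \<longleftrightarrow> (\<exists>!d. is_PhiStar r \<mu> m n d)"
proof
  assume "normal r \<mu> n m"
  then obtain c where c: "is_Phi r \<mu> n m c" and u: "\<And>c'. is_Phi r \<mu> n m c' \<Longrightarrow> c' = c"
    unfolding normal_def by blast
  show "\<exists>!d. is_PhiStar r \<mu> m n d"
  proof (rule ex1I[of _ "sharp c"])
    show "is_PhiStar r \<mu> m n (sharp c)" by (rule sharp_Phi[OF circ c])
  next
    fix d assume "is_PhiStar r \<mu> m n d"
    then have "is_Phi r \<mu> n m (sharp d)" using circ sharp_Star by metis
    then have "sharp d = c" by (rule u)
    then show "d = sharp c" by auto
  qed
next
  assume "\<exists>!d. is_PhiStar r \<mu> m n d"
  then obtain c where c: "is_PhiStar r \<mu> m n c" and u: "\<And>c'. is_PhiStar r \<mu> m n c' \<Longrightarrow> c' = c"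
    by blast
  show "normal r \<mu> n m" unfolding normal_def
  proof (rule ex1I[of _ "sharp c"])
    show "is_Phi r \<mu> n m (sharp c)" by (rule sharp_Star[OF circ c])
  next
    fix d assume "is_Phi r \<mu> n m d"
    then have "is_PhiStar r \<mu> m n (sharp d)" using circ sharp_Phi by metis
    then have "sharp d = c" by (rule u)
    then show "d = sharp c" by auto
  qed
qed

theorem proposition2p9:
  fixes r :: nat and \<mu> :: "nat \<Rightarrow> complex measure" and n m :: "nat \<Rightarrow> nat"
  assumes "\<And>j. j < r \<Longrightarrow> circle_measure (\<mu> j)"
  shows "(normal r \<mu> n m \<longleftrightarrow> normal r \<mu> m n)
    \<and> (normal r \<mu> n m \<longrightarrow>
        (\<forall>z::complex. z \<noteq> 0 \<longrightarrow>
           cnj (laurent_eval (- int (tot r m)) (int (tot r n)) (Phi r \<mu> n m) (1 / cnj z))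
           = laurent_eval (- int (tot r n)) (int (tot r m)) (PhiStar r \<mu> m n) z))"
proof
  note circ = assms
  show "normal r \<mu> n m \<longleftrightarrow> normal r \<mu> m n"
    using normal_star[where r=r and \<mu>=\<mu> and n=n and m=m, OF circ]
      star_iff_H[where r=r and \<mu>=\<mu> and n=m and m=n, OF circ]
      H_equiv[where n=m and m=n and r=r and \<mu>=\<mu>]
      normal_iff_H[where r=r and \<mu>=\<mu> and n=m and m=n, OF circ] by simp
  show "normal r \<mu> n m \<longrightarrow>
        (\<forall>z::complex. z \<noteq> 0 \<longrightarrow>
           cnj (laurent_eval (- int (tot r m)) (int (tot r n)) (Phi r \<mu> n m) (1 / cnj z))
           = laurent_eval (- int (tot r n)) (int (tot r m)) (PhiStar r \<mu> m n) z)"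
  proof (intro impI allI)
    fix z :: complex
    assume N: "normal r \<mu> n m"
    then have P: "is_Phi r \<mu> n m (Phi r \<mu> n m)" unfolding normal_def Phi_def by (rule theI')
    have ex: "\<exists>!d. is_PhiStar r \<mu> m n d" using N normal_star[where r=r and \<mu>=\<mu> and n=n and m=m, OF circ] by blast
    have SP: "is_PhiStar r \<mu> m n (sharp (Phi r \<mu> n m))" using circ P sharp_Phi by metis
    have "PhiStar r \<mu> m n = sharp (Phi r \<mu> n m)"
      unfolding PhiStar_def using ex SP by (metis the1_equality)
    then show "cnj (laurent_eval (- int (tot r m)) (int (tot r n)) (Phi r \<mu> n m) (1 / cnj z))
           = laurent_eval (- int (tot r n)) (int (tot r m)) (PhiStar r \<mu> m n) z"
      using sharp_eval[of "- int (tot r m)" "int (tot r n)" "Phi r \<mu> n m" z] by simp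
  qed
qed


end
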